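(* Let $S$ be an abundant semigroup and $S^0$ a quasi-ideal adequate transversal of $S$ (i.e. an adequate transversal with $S^0SS^0\subseteq S^0$). Let $R=\{x\in S:e_x=e_{\bar x}\}$ and $L=\{x\in S: f_x=f_{\bar x}\}$. Then $L$ and $R$ are subsemigroups of $S$, $L$ is left adequate, $R$ is right adequate, and $S^0$ is a quasi-ideal adequate transversal of both $L$ and $R$.
   Context: For a semigroup $S$, $\mathcal{R}^\ast=\{(a,b): \text{for all } x,y\in S^1,\ xa=ya \iff xb=yb\}$ and $\mathcal{L}^\ast$ dually. $S$ is abundant if every $\mathcal{R}^\ast$-class and $\mathcal{L}^\ast$-class contains an idempotent; adequate if abundant with commuting idempotents; left (resp. right) adequate if abundant and every $\mathcal{R}^\ast$-class (resp. $\mathcal{L}^\ast$-class) contains a unique idempotent. In an adequate semigroup $a^+,a^\ast$ are the unique idempotents $\mathcal{R}^\ast$-, resp. $\mathcal{L}^\ast$-related to $a$. A subsemigroup $U$ of abundant $S$ is a $\ast$-subsemigroup if $U$ is abundant and $\mathcal{L}^\ast_U=\mathcal{L}^\ast_S\cap(U\times U)$, $\mathcal{R}^\ast_U=\mathcal{R}^\ast_S\cap(U\times U)$. An adequate $\ast$-subsemigroup $S^0$ of abundant $S$ is an adequate transversal if for each $x\in S$ there is a unique $\bar x\in S^0$ and idempotents $e,f$ of $S$ with $x=e\bar xf$, $e\,\mathcal{L}\,\bar x^+$, $f\,\mathcal{R}\,\bar x^\ast$ ($\mathcal{L},\mathcal{R}$ Green's relations); these $e,f$ are unique and denoted $e_x,f_x$.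 A quasi-ideal adequate transversal is one with $S^0SS^0\subseteq S^0$. *)

theory Defs
  imports Main
begin

definition semigroup_on :: "'a set \<Rightarrow> ('a \<Rightarrow> 'a \<Rightarrow> 'a) \<Rightarrow> bool" where
  "semigroup_on S m \<longleftrightarrow> (\<forall>a\<in>S. \<forall>b\<in>S. m a b \<in> S)
     \<and> (\<forall>a\<in>S. \<forall>b\<in>S. \<forall>c\<in>S. m (m a b) c = m a (m b c))"

definition subsemigroup :: "'a set \<Rightarrow> 'a set \<Rightarrow> ('a \<Rightarrow> 'a \<Rightarrow> 'a) \<Rightarrow> bool" where
  "subsemigroup U S m \<longleftrightarrow> U \<subseteq> S \<and> (\<forall>a\<in>U. \<forall>b\<in>U. m a b \<in> U)"

text \<open>Elements of S^1: None is the adjoined identity, Some x stands for x in S.\<close>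

definition S1 :: "'a set \<Rightarrow> 'a option set" where
  "S1 S = insert None (Some ` S)"

fun lmult1 :: "('a \<Rightarrow> 'a \<Rightarrow> 'a) \<Rightarrow> 'a option \<Rightarrow> 'a \<Rightarrow> 'a" where
  "lmult1 m None a = a"
| "lmult1 m (Some x) a = m x a"

fun rmult1 :: "('a \<Rightarrow> 'a \<Rightarrow> 'a) \<Rightarrow> 'a \<Rightarrow> 'a option \<Rightarrow> 'a" where
  "rmult1 m a None = a"
| "rmult1 m a (Some x) = m a x"

definition idems :: "'a set \<Rightarrow> ('a \<Rightarrow> 'a \<Rightarrow> 'a) \<Rightarrow> 'a set" where
  "idems S m = {e\<in>S. m e e = e}"

definition Rstar :: "'a set \<Rightarrow> ('a \<Rightarrow> 'a \<Rightarrow> 'a) \<Rightarrow> 'a \<Rightarrow> 'a \<Rightarrow> bool" where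
  "Rstar S m a b \<longleftrightarrow> a \<in> S \<and> b \<in> S \<and>
     (\<forall>x\<in>S1 S. \<forall>y\<in>S1 S. lmult1 m x a = lmult1 m y a \<longleftrightarrow> lmult1 m x b = lmult1 m y b)"

definition Lstar :: "'a set \<Rightarrow> ('a \<Rightarrow> 'a \<Rightarrow> 'a) \<Rightarrow> 'a \<Rightarrow> 'a \<Rightarrow> bool" where
  "Lstar S m a b \<longleftrightarrow> a \<in> S \<and> b \<in> S \<and>
     (\<forall>x\<in>S1 S. \<forall>y\<in>S1 S. rmult1 m a x = rmult1 m a y \<longleftrightarrow> rmult1 m b x = rmult1 m b y)"

definition greenL :: "'a set \<Rightarrow> ('a \<Rightarrow> 'a \<Rightarrow> 'a) \<Rightarrow> 'a \<Rightarrow> 'a \<Rightarrow> bool" where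
  "greenL S m a b \<longleftrightarrow> a \<in> S \<and> b \<in> S \<and>
     (\<exists>u\<in>S1 S. a = lmult1 m u b) \<and> (\<exists>v\<in>S1 S. b = lmult1 m v a)"

definition greenR :: "'a set \<Rightarrow> ('a \<Rightarrow> 'a \<Rightarrow> 'a) \<Rightarrow> 'a \<Rightarrow> 'a \<Rightarrow> bool" where
  "greenR S m a b \<longleftrightarrow> a \<in> S \<and> b \<in> S \<and>
     (\<exists>u\<in>S1 S. a = rmult1 m b u) \<and> (\<exists>v\<in>S1 S. b = rmult1 m a v)"

definition abundant :: "'a set \<Rightarrow> ('a \<Rightarrow> 'a \<Rightarrow> 'a) \<Rightarrow> bool" where
  "abundant S m \<longleftrightarrow> semigroup_on S m \<and>
     (\<forall>a\<in>S. \<exists>e\<in>idems S m. Rstar S m a e) \<and>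
     (\<forall>a\<in>S. \<exists>e\<in>idems S m. Lstar S m a e)"

definition adequate :: "'a set \<Rightarrow> ('a \<Rightarrow> 'a \<Rightarrow> 'a) \<Rightarrow> bool" where
  "adequate S m \<longleftrightarrow> abundant S m \<and>
     (\<forall>e\<in>idems S m. \<forall>f\<in>idems S m. m e f = m f e)"

definition left_adequate :: "'a set \<Rightarrow> ('a \<Rightarrow> 'a \<Rightarrow> 'a) \<Rightarrow> bool" where
  "left_adequate S m \<longleftrightarrow> abundant S m \<and>
     (\<forall>a\<in>S. \<exists>!e. e \<in> idems S m \<and> Rstar S m a e)"

definition right_adequate :: "'a set \<Rightarrow> ('a \<Rightarrow> 'a \<Rightarrow> 'a) \<Rightarrow> bool" where
  "right_adequate S m \<longleftrightarrow> abundant S m \<and>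
     (\<forall>a\<in>S. \<exists>!e. e \<in> idems S m \<and> Lstar S m a e)"

definition aplus :: "'a set \<Rightarrow> ('a \<Rightarrow> 'a \<Rightarrow> 'a) \<Rightarrow> 'a \<Rightarrow> 'a" where
  "aplus U m a = (THE e. e \<in> idems U m \<and> Rstar U m a e)"

definition astar :: "'a set \<Rightarrow> ('a \<Rightarrow> 'a \<Rightarrow> 'a) \<Rightarrow> 'a \<Rightarrow> 'a" where
  "astar U m a = (THE e. e \<in> idems U m \<and> Lstar U m a e)"

definition star_subsemigroup :: "'a set \<Rightarrow> 'a set \<Rightarrow> ('a \<Rightarrow> 'a \<Rightarrow> 'a) \<Rightarrow> bool" where
  "star_subsemigroup U S m \<longleftrightarrow> subsemigroup U S m \<and> abundant U m \<and>
     (\<forall>a\<in>U. \<forall>b\<in>U. Lstar U m a b \<longleftrightarrow> Lstar S m a b) \<and>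
     (\<forall>a\<in>U. \<forall>b\<in>U. Rstar U m a b \<longleftrightarrow> Rstar S m a b)"

definition decomp :: "'a set \<Rightarrow> 'a set \<Rightarrow> ('a \<Rightarrow> 'a \<Rightarrow> 'a) \<Rightarrow> 'a \<Rightarrow> 'a \<Rightarrow> 'a \<Rightarrow> 'a \<Rightarrow> bool" where
  "decomp S S0 m x xb e f \<longleftrightarrow> xb \<in> S0 \<and> e \<in> idems S m \<and> f \<in> idems S m \<and>
     x = m (m e xb) f \<and> greenL S m e (aplus S0 m xb) \<and> greenR S m f (astar S0 m xb)"

definition adequate_transversal :: "'a set \<Rightarrow> 'a set \<Rightarrow> ('a \<Rightarrow> 'a \<Rightarrow> 'a) \<Rightarrow> bool" where
  "adequate_transversal S S0 m \<longleftrightarrow> abundant S m \<and> adequate S0 m \<and>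
     star_subsemigroup S0 S m \<and>
     (\<forall>x\<in>S. \<exists>!xb. xb \<in> S0 \<and> (\<exists>e f. decomp S S0 m x xb e f))"

definition quasi_ideal_adequate_transversal :: "'a set \<Rightarrow> 'a set \<Rightarrow> ('a \<Rightarrow> 'a \<Rightarrow> 'a) \<Rightarrow> bool" where
  "quasi_ideal_adequate_transversal S S0 m \<longleftrightarrow> adequate_transversal S S0 m \<and>
     (\<forall>a\<in>S0. \<forall>s\<in>S. \<forall>b\<in>S0. m (m a s) b \<in> S0)"

definition xbar :: "'a set \<Rightarrow> 'a set \<Rightarrow> ('a \<Rightarrow> 'a \<Rightarrow> 'a) \<Rightarrow> 'a \<Rightarrow> 'a" where
  "xbar S S0 m x = (THE xb. xb \<in> S0 \<and> (\<exists>e f. decomp S S0 m x xb e f))"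

definition ex :: "'a set \<Rightarrow> 'a set \<Rightarrow> ('a \<Rightarrow> 'a \<Rightarrow> 'a) \<Rightarrow> 'a \<Rightarrow> 'a" where
  "ex S S0 m x = (THE e. \<exists>f. decomp S S0 m x (xbar S S0 m x) e f)"

definition fx :: "'a set \<Rightarrow> 'a set \<Rightarrow> ('a \<Rightarrow> 'a \<Rightarrow> 'a) \<Rightarrow> 'a \<Rightarrow> 'a" where
  "fx S S0 m x = (THE f. \<exists>e. decomp S S0 m x (xbar S S0 m x) e f)"

end

theory Submission
  imports Defs
begin

lemma S1_mono: "U \<subseteq> S \<Longrightarrow> S1 U \<subseteq> S1 S"
  unfolding S1_def by auto

lemma Rstar_mono: assumes "U \<subseteq> S" "a \<in> U" "b \<in> U" "Rstar S m a b" shows "Rstar U m a b"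
  unfolding Rstar_def
proof (intro conjI assms(2,3) ballI)
  fix x y assume "x \<in> S1 U" "y \<in> S1 U"
  then have "x \<in> S1 S" "y \<in> S1 S" using S1_mono[OF assms(1)] by auto
  then show "lmult1 m x a = lmult1 m y a \<longleftrightarrow> lmult1 m x b = lmult1 m y b"
    using assms(4) unfolding Rstar_def by simp
qed

lemma Lstar_mono: assumes "U \<subseteq> S" "a \<in> U" "b \<in> U" "Lstar S m a b" shows "Lstar U m a b"
  unfolding Lstar_def
proof (intro conjI assms(2,3) ballI)
  fix x y assume "x \<in> S1 U" "y \<in> S1 U"
  then have "x \<in> S1 S" "y \<in> S1 S" using S1_mono[OF assms(1)] by auto
  then show "rmult1 m a x = rmult1 m a y \<longleftrightarrow> rmult1 m b x = rmult1 m b y"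
    using assms(4) unfolding Lstar_def by simp
qed

lemma greenL_mono: "U \<subseteq> S \<Longrightarrow> greenL U m a b \<Longrightarrow> greenL S m a b"
  unfolding greenL_def using S1_mono by blast

lemma greenR_mono: "U \<subseteq> S \<Longrightarrow> greenR U m a b \<Longrightarrow> greenR S m a b"
  unfolding greenR_def using S1_mono by blast

lemma idems_mono: "U \<subseteq> S \<Longrightarrow> idems U m \<subseteq> idems S m"
  unfolding idems_def by auto

lemma Rstar_sym: "Rstar U m a b \<Longrightarrow> Rstar U m b a"
  unfolding Rstar_def by simp
lemma Rstar_trans: "Rstar U m a b \<Longrightarrow> Rstar U m b c \<Longrightarrow> Rstar U m a c"
  unfolding Rstar_def by simp
lemma Rstar_refl: "a \<in> U \<Longrightarrow> Rstar U m a a"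
  unfolding Rstar_def by simp
lemma Lstar_sym: "Lstar U m a b \<Longrightarrow> Lstar U m b a"
  unfolding Lstar_def by simp
lemma Lstar_trans: "Lstar U m a b \<Longrightarrow> Lstar U m b c \<Longrightarrow> Lstar U m a c"
  unfolding Lstar_def by simp
lemma Lstar_refl: "a \<in> U \<Longrightarrow> Lstar U m a a"
  unfolding Lstar_def by simp

lemma Rstar_use2: "Rstar U m a b \<Longrightarrow> x \<in> U \<Longrightarrow> y \<in> U \<Longrightarrow> m x a = m y a \<Longrightarrow> m x b = m y b"
proof -
  assume "Rstar U m a b" "x \<in> U" "y \<in> U" "m x a = m y a"
  moreover have "Some x \<in> S1 U" "Some y \<in> S1 U" using \<open>x\<in>U\<close> \<open>y\<in>U\<close> by (auto simp: S1_def)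
  ultimately show ?thesis unfolding Rstar_def by fastforce
qed

lemma Rstar_use1: "Rstar U m a b \<Longrightarrow> x \<in> U \<Longrightarrow> m x a = a \<Longrightarrow> m x b = b"
proof -
  assume "Rstar U m a b" "x \<in> U" "m x a = a"
  moreover have "Some x \<in> S1 U" "None \<in> S1 U" using \<open>x\<in>U\<close> by (auto simp: S1_def)
  ultimately show ?thesis unfolding Rstar_def by fastforce
qed

lemma Lstar_use2: "Lstar U m a b \<Longrightarrow> x \<in> U \<Longrightarrow> y \<in> U \<Longrightarrow> m a x = m a y \<Longrightarrow> m b x = m b y"
proof -
  assume "Lstar U m a b" "x \<in> U" "y \<in> U" "m a x = m a y"
  moreover have "Some x \<in> S1 U" "Some y \<in> S1 U" using \<open>x\<in>U\<close> \<open>y\<in>U\<close> by (auto simp: S1_def)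
  ultimately show ?thesis unfolding Lstar_def by fastforce
qed

lemma Lstar_use1: "Lstar U m a b \<Longrightarrow> x \<in> U \<Longrightarrow> m a x = a \<Longrightarrow> m b x = b"
proof -
  assume "Lstar U m a b" "x \<in> U" "m a x = a"
  moreover have "Some x \<in> S1 U" "None \<in> S1 U" using \<open>x\<in>U\<close> by (auto simp: S1_def)
  ultimately show ?thesis unfolding Lstar_def by fastforce
qed

lemma Rstar_idem: assumes "Rstar U m a e" "e \<in> idems U m" shows "m e a = a"
proof -
  have "e \<in> U" "m e e = e" using assms(2) by (auto simp: idems_def)
  then show ?thesis by (rule Rstar_use1[OF Rstar_sym[OF assms(1)]])
qed

lemma Lstar_idem: assumes "Lstar U m a e" "e \<in> idems U m" shows "m a e = a"
proof -
  have "e \<in> U" "m e e = e" using assms(2) by (auto simp: idems_def)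
  then show ?thesis by (rule Lstar_use1[OF Lstar_sym[OF assms(1)]])
qed

lemma Rstar_intro:
  assumes "a \<in> U" "b \<in> U"
    and h2: "\<And>x y. x \<in> U \<Longrightarrow> y \<in> U \<Longrightarrow> m x a = m y a \<longleftrightarrow> m x b = m y b"
    and h1: "\<And>x. x \<in> U \<Longrightarrow> m x a = a \<longleftrightarrow> m x b = b"
  shows "Rstar U m a b"
  unfolding Rstar_def
proof (intro conjI assms(1,2) ballI)
  fix x y assume "x \<in> S1 U" "y \<in> S1 U"
  then show "lmult1 m x a = lmult1 m y a \<longleftrightarrow> lmult1 m x b = lmult1 m y b"
  proof (cases x; cases y)
    fix x' y' assume "x = Some x'" "y = Some y'" then show ?thesis using \<open>x \<in> S1 U\<close> \<open>y \<in> S1 U\<close> by (auto simp: S1_def h2)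
  next
    fix x' assume "x = Some x'" "y = None" then show ?thesis using \<open>x \<in> S1 U\<close> h1[of x'] by (auto simp: S1_def)
  next
    fix y' assume "x = None" "y = Some y'" then show ?thesis using \<open>y \<in> S1 U\<close> h1[of y'] by (auto simp: S1_def)
  qed simp
qed

lemma Lstar_intro:
  assumes "a \<in> U" "b \<in> U"
    and h2: "\<And>x y. x \<in> U \<Longrightarrow> y \<in> U \<Longrightarrow> m a x = m a y \<longleftrightarrow> m b x = m b y"
    and h1: "\<And>x. x \<in> U \<Longrightarrow> m a x = a \<longleftrightarrow> m b x = b"
  shows "Lstar U m a b"
  unfolding Lstar_def
proof (intro conjI assms(1,2) ballI)
  fix x y assume "x \<in> S1 U" "y \<in> S1 U"
  then show "rmult1 m a x = rmult1 m a y \<longleftrightarrow> rmult1 m b x = rmult1 m b y"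
  proof (cases x; cases y)
    fix x' y' assume "x = Some x'" "y = Some y'" then show ?thesis using \<open>x \<in> S1 U\<close> \<open>y \<in> S1 U\<close> by (auto simp: S1_def h2)
  next
    fix x' assume "x = Some x'" "y = None" then show ?thesis using \<open>x \<in> S1 U\<close> h1[of x'] by (auto simp: S1_def)
  next
    fix y' assume "x = None" "y = Some y'" then show ?thesis using \<open>y \<in> S1 U\<close> h1[of y'] by (auto simp: S1_def)
  qed simp
qed

lemma sg_closed: "semigroup_on U m \<Longrightarrow> a \<in> U \<Longrightarrow> b \<in> U \<Longrightarrow> m a b \<in> U"
  unfolding semigroup_on_def by blast
lemma sg_assoc: "semigroup_on U m \<Longrightarrow> a \<in> U \<Longrightarrow> b \<in> U \<Longrightarrow> c \<in> U \<Longrightarrow> m (m a b) c = m a (m b c)"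
  unfolding semigroup_on_def by blast

lemma greenR_Rstar:
  assumes sg: "semigroup_on U m" and g: "greenR U m a b"
  shows "Rstar U m a b"
proof -
  have aU: "a \<in> U" and bU: "b \<in> U" using g unfolding greenR_def by auto
  obtain u where u: "u \<in> S1 U" "a = rmult1 m b u" using g unfolding greenR_def by auto
  obtain v where v: "v \<in> S1 U" "b = rmult1 m a v" using g unfolding greenR_def by auto
  have key2: "m x (rmult1 m c w) = m y (rmult1 m c w)"
    if "c \<in> U" "w \<in> S1 U" "x \<in> U" "y \<in> U" "m x c = m y c" for c w x y
    using that by (cases w) (auto simp: S1_def sg_assoc[OF sg, symmetric])
  have key1: "m x (rmult1 m c w) = rmult1 m c w"
    if "c \<in> U" "w \<in> S1 U" "x \<in> U" "m x c = c" for c w x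
    using that by (cases w) (auto simp: S1_def sg_assoc[OF sg, symmetric])
  show ?thesis
  proof (rule Rstar_intro[OF aU bU])
    fix x y assume "x \<in> U" "y \<in> U"
    then show "m x a = m y a \<longleftrightarrow> m x b = m y b"
    proof -
      have 1: "m x a = m y a \<Longrightarrow> m x b = m y b"
        using key2[OF aU v(1), of x y] \<open>x\<in>U\<close> \<open>y\<in>U\<close> by (simp only: v(2)[symmetric])
      have 2: "m x b = m y b \<Longrightarrow> m x a = m y a"
        using key2[OF bU u(1), of x y] \<open>x\<in>U\<close> \<open>y\<in>U\<close> by (simp only: u(2)[symmetric])
      show ?thesis using 1 2 by blast
    qed
  next
    fix x assume "x \<in> U"
    then show "m x a = a \<longleftrightarrow> m x b = b"
    proof -
      have 1: "m x a = a \<Longrightarrow> m x b = b"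
        using key1[OF aU v(1), of x] \<open>x\<in>U\<close> by (simp only: v(2)[symmetric])
      have 2: "m x b = b \<Longrightarrow> m x a = a"
        using key1[OF bU u(1), of x] \<open>x\<in>U\<close> by (simp only: u(2)[symmetric])
      show ?thesis using 1 2 by blast
    qed
  qed
qed

lemma greenL_Lstar:
  assumes sg: "semigroup_on U m" and g: "greenL U m a b"
  shows "Lstar U m a b"
proof -
  have aU: "a \<in> U" and bU: "b \<in> U" using g unfolding greenL_def by auto
  obtain u where u: "u \<in> S1 U" "a = lmult1 m u b" using g unfolding greenL_def by auto
  obtain v where v: "v \<in> S1 U" "b = lmult1 m v a" using g unfolding greenL_def by auto
  have key2: "m (lmult1 m w c) x = m (lmult1 m w c) y"
    if "c \<in> U" "w \<in> S1 U" "x \<in> U" "y \<in> U" "m c x = m c y" for c w x y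
    using that by (cases w) (auto simp: S1_def sg_assoc[OF sg])
  have key1: "m (lmult1 m w c) x = lmult1 m w c"
    if "c \<in> U" "w \<in> S1 U" "x \<in> U" "m c x = c" for c w x
    using that by (cases w) (auto simp: S1_def sg_assoc[OF sg])
  show ?thesis
  proof (rule Lstar_intro[OF aU bU])
    fix x y assume "x \<in> U" "y \<in> U"
    then show "m a x = m a y \<longleftrightarrow> m b x = m b y"
    proof -
      have 1: "m a x = m a y \<Longrightarrow> m b x = m b y"
        using key2[OF aU v(1), of x y] \<open>x\<in>U\<close> \<open>y\<in>U\<close> by (simp only: v(2)[symmetric])
      have 2: "m b x = m b y \<Longrightarrow> m a x = m a y"
        using key2[OF bU u(1), of x y] \<open>x\<in>U\<close> \<open>y\<in>U\<close> by (simp only: u(2)[symmetric])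
      show ?thesis using 1 2 by blast
    qed
  next
    fix x assume "x \<in> U"
    then show "m a x = a \<longleftrightarrow> m b x = b"
    proof -
      have 1: "m a x = a \<Longrightarrow> m b x = b"
        using key1[OF aU v(1), of x] \<open>x\<in>U\<close> by (simp only: v(2)[symmetric])
      have 2: "m b x = b \<Longrightarrow> m a x = a"
        using key1[OF bU u(1), of x] \<open>x\<in>U\<close> by (simp only: u(2)[symmetric])
      show ?thesis using 1 2 by blast
    qed
  qed
qed

lemma greenL_idem:
  assumes sg: "semigroup_on U m" and e: "e \<in> idems U m" and p: "p \<in> idems U m"
  shows "greenL U m e p \<longleftrightarrow> (m e p = e \<and> m p e = p)"
proof
  assume g: "greenL U m e p"
  have eU: "e \<in> U" "m e e = e" and pU: "p \<in> U" "m p p = p" using e p by (auto simp: idems_def)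
  obtain u where u: "u \<in> S1 U" "e = lmult1 m u p" using g unfolding greenL_def by auto
  obtain v where v: "v \<in> S1 U" "p = lmult1 m v e" using g unfolding greenL_def by auto
  have "m e p = e" using u eU pU by (cases u) (auto simp: S1_def sg_assoc[OF sg])
  moreover have "m p e = p" using v eU pU by (cases v) (auto simp: S1_def sg_assoc[OF sg])
  ultimately show "m e p = e \<and> m p e = p" by blast
next
  assume h: "m e p = e \<and> m p e = p"
  have eU: "e \<in> U" and pU: "p \<in> U" using e p by (auto simp: idems_def)
  have "Some e \<in> S1 U" "Some p \<in> S1 U" using eU pU by (auto simp: S1_def)
  then show "greenL U m e p" unfolding greenL_def
    using h eU pU by (metis lmult1.simps(2))
qed

lemma greenR_idem:
  assumes sg: "semigroup_on U m" and f: "f \<in> idems U m" and q: "q \<in> idems U m"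
  shows "greenR U m f q \<longleftrightarrow> (m q f = f \<and> m f q = q)"
proof
  assume g: "greenR U m f q"
  have fU: "f \<in> U" "m f f = f" and qU: "q \<in> U" "m q q = q" using f q by (auto simp: idems_def)
  obtain u where u: "u \<in> S1 U" "f = rmult1 m q u" using g unfolding greenR_def by auto
  obtain v where v: "v \<in> S1 U" "q = rmult1 m f v" using g unfolding greenR_def by auto
  have "m q f = f" using u fU qU by (cases u) (auto simp: S1_def sg_assoc[OF sg, symmetric])
  moreover have "m f q = q" using v fU qU by (cases v) (auto simp: S1_def sg_assoc[OF sg, symmetric])
  ultimately show "m q f = f \<and> m f q = q" by blast
next
  assume h: "m q f = f \<and> m f q = q"
  have fU: "f \<in> U" and qU: "q \<in> U" using f q by (auto simp: idems_def)
  have "Some f \<in> S1 U" "Some q \<in> S1 U" using fU qU by (auto simp: S1_def)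
  then show "greenR U m f q" unfolding greenR_def
    using h fU qU by (metis rmult1.simps(2))
qed

lemma Rstar_lcompat:
  assumes sg: "semigroup_on U m" and c: "c \<in> U" and r: "Rstar U m a b"
  shows "Rstar U m (m c a) (m c b)"
proof -
  have aU: "a \<in> U" and bU: "b \<in> U" using r unfolding Rstar_def by auto
  show ?thesis
  proof (rule Rstar_intro)
    show "m c a \<in> U" "m c b \<in> U" using sg_closed[OF sg] aU bU c by auto
  next
    fix x y assume xy: "x \<in> U" "y \<in> U"
    have "m x (m c a) = m y (m c a) \<longleftrightarrow> m (m x c) a = m (m y c) a"
      using xy aU c by (simp add: sg_assoc[OF sg])
    also have "\<dots> \<longleftrightarrow> m (m x c) b = m (m y c) b"
      using Rstar_use2[OF r] Rstar_use2[OF Rstar_sym[OF r]] sg_closed[OF sg] xy c by metis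
    also have "\<dots> \<longleftrightarrow> m x (m c b) = m y (m c b)"
      using xy bU c by (simp add: sg_assoc[OF sg])
    finally show "m x (m c a) = m y (m c a) \<longleftrightarrow> m x (m c b) = m y (m c b)" .
  next
    fix x assume x: "x \<in> U"
    have "m x (m c a) = m c a \<longleftrightarrow> m (m x c) a = m c a"
      using x aU c by (simp add: sg_assoc[OF sg])
    also have "\<dots> \<longleftrightarrow> m (m x c) b = m c b"
      using Rstar_use2[OF r] Rstar_use2[OF Rstar_sym[OF r]] sg_closed[OF sg] x c by metis
    also have "\<dots> \<longleftrightarrow> m x (m c b) = m c b"
      using x bU c by (simp add: sg_assoc[OF sg])
    finally show "m x (m c a) = m c a \<longleftrightarrow> m x (m c b) = m c b" .
  qed
qed

lemma Lstar_rcompat: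
  assumes sg: "semigroup_on U m" and c: "c \<in> U" and r: "Lstar U m a b"
  shows "Lstar U m (m a c) (m b c)"
proof -
  have aU: "a \<in> U" and bU: "b \<in> U" using r unfolding Lstar_def by auto
  show ?thesis
  proof (rule Lstar_intro)
    show "m a c \<in> U" "m b c \<in> U" using sg_closed[OF sg] aU bU c by auto
  next
    fix x y assume xy: "x \<in> U" "y \<in> U"
    have "m (m a c) x = m (m a c) y \<longleftrightarrow> m a (m c x) = m a (m c y)"
      using xy aU c by (simp add: sg_assoc[OF sg])
    also have "\<dots> \<longleftrightarrow> m b (m c x) = m b (m c y)"
      using Lstar_use2[OF r] Lstar_use2[OF Lstar_sym[OF r]] sg_closed[OF sg] xy c by metis
    also have "\<dots> \<longleftrightarrow> m (m b c) x = m (m b c) y"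
      using xy bU c by (simp add: sg_assoc[OF sg])
    finally show "m (m a c) x = m (m a c) y \<longleftrightarrow> m (m b c) x = m (m b c) y" .
  next
    fix x assume x: "x \<in> U"
    have "m (m a c) x = m a c \<longleftrightarrow> m a (m c x) = m a c"
      using x aU c by (simp add: sg_assoc[OF sg])
    also have "\<dots> \<longleftrightarrow> m b (m c x) = m b c"
      using Lstar_use2[OF r] Lstar_use2[OF Lstar_sym[OF r]] sg_closed[OF sg] x c by metis
    also have "\<dots> \<longleftrightarrow> m (m b c) x = m b c"
      using x bU c by (simp add: sg_assoc[OF sg])
    finally show "m (m a c) x = m a c \<longleftrightarrow> m (m b c) x = m b c" .
  qed
qed


definition dual :: "('a \<Rightarrow> 'a \<Rightarrow> 'a) \<Rightarrow> 'a \<Rightarrow> 'a \<Rightarrow> 'a" where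
  "dual m = (\<lambda>a b. m b a)"

lemma dual_apply[simp]: "dual m a b = m b a"
  by (simp add: dual_def)

lemma dual_dual[simp]: "dual (dual m) = m"
  by (simp add: dual_def)

lemma lmult1_dual: "lmult1 (dual m) x a = rmult1 m a x"
  by (cases x) auto
lemma rmult1_dual: "rmult1 (dual m) a x = lmult1 m x a"
  by (cases x) auto

lemma Rstar_dual: "Rstar U (dual m) = Lstar U m"
  by (intro ext) (simp add: Rstar_def Lstar_def lmult1_dual)
lemma Lstar_dual: "Lstar U (dual m) = Rstar U m"
  by (intro ext) (simp add: Rstar_def Lstar_def rmult1_dual)
lemma idems_dual: "idems U (dual m) = idems U m"
  by (simp add: idems_def)
lemma greenL_dual: "greenL U (dual m) = greenR U m"
  by (intro ext) (simp add: greenL_def greenR_def lmult1_dual)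
lemma greenR_dual: "greenR U (dual m) = greenL U m"
  by (intro ext) (simp add: greenL_def greenR_def rmult1_dual)

lemma semigroup_on_dual: "semigroup_on U (dual m) \<longleftrightarrow> semigroup_on U m"
proof
  assume h: "semigroup_on U (dual m)"
  show "semigroup_on U m" unfolding semigroup_on_def
  proof (intro conjI ballI)
    fix a b assume "a \<in> U" "b \<in> U" then show "m a b \<in> U" using sg_closed[OF h, of b a] by simp
  next
    fix a b c assume "a \<in> U" "b \<in> U" "c \<in> U" then show "m (m a b) c = m a (m b c)"
      using sg_assoc[OF h, of c b a] by simp
  qed
next
  assume h: "semigroup_on U m"
  show "semigroup_on U (dual m)" unfolding semigroup_on_def
  proof (intro conjI ballI)
    fix a b assume "a \<in> U" "b \<in> U" then show "dual m a b \<in> U" using sg_closed[OF h, of b a] by simp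
  next
    fix a b c assume "a \<in> U" "b \<in> U" "c \<in> U" then show "dual m (dual m a b) c = dual m a (dual m b c)"
      using sg_assoc[OF h, of c b a] by simp
  qed
qed

lemma abundant_dual: "abundant U (dual m) \<longleftrightarrow> abundant U m"
  unfolding abundant_def semigroup_on_dual Rstar_dual Lstar_dual idems_dual by blast

lemma adequate_dual: "adequate U (dual m) \<longleftrightarrow> adequate U m"
  unfolding adequate_def abundant_dual idems_dual by (auto simp: idems_def)

lemma left_adequate_dual: "left_adequate U (dual m) \<longleftrightarrow> right_adequate U m"
  unfolding left_adequate_def right_adequate_def abundant_dual idems_dual Rstar_dual ..

lemma aplus_dual: "aplus U (dual m) = astar U m"
  by (intro ext) (simp add: aplus_def astar_def idems_dual Rstar_dual)
lemma astar_dual: "astar U (dual m) = aplus U m"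
  by (intro ext) (simp add: aplus_def astar_def idems_dual Lstar_dual)

lemma subsemigroup_dual: "subsemigroup U S (dual m) \<longleftrightarrow> subsemigroup U S m"
  unfolding subsemigroup_def by auto

lemma star_subsemigroup_dual: "star_subsemigroup U S (dual m) \<longleftrightarrow> star_subsemigroup U S m"
  unfolding star_subsemigroup_def subsemigroup_dual abundant_dual Rstar_dual Lstar_dual by blast

lemma decomp_dual:
  assumes sg: "semigroup_on S m" and sub: "S0 \<subseteq> S"
  shows "decomp S S0 (dual m) x xb e f \<longleftrightarrow> decomp S S0 m x xb f e"
proof -
  have "m f (m xb e) = m (m f xb) e" if "xb \<in> S0" "e \<in> idems S m" "f \<in> idems S m"
    using that sub sg_assoc[OF sg, of f xb e] by (auto simp: idems_def)
  then show ?thesis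
    unfolding decomp_def idems_dual greenL_dual greenR_dual aplus_dual astar_dual by auto
qed

lemma ex_decomp_dual:
  assumes sg: "semigroup_on S m" and sub: "S0 \<subseteq> S"
  shows "(\<exists>e f. decomp S S0 (dual m) x xb e f) \<longleftrightarrow> (\<exists>e f. decomp S S0 m x xb e f)"
  using decomp_dual[OF sg sub] by blast

lemma xbar_dual:
  assumes sg: "semigroup_on S m" and sub: "S0 \<subseteq> S"
  shows "xbar S S0 (dual m) x = xbar S S0 m x"
  unfolding xbar_def ex_decomp_dual[OF sg sub] ..

lemma ex_dual:
  assumes sg: "semigroup_on S m" and sub: "S0 \<subseteq> S"
  shows "ex S S0 (dual m) x = fx S S0 m x"
  unfolding ex_def fx_def xbar_dual[OF sg sub] decomp_dual[OF sg sub] ..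

lemma fx_dual:
  assumes sg: "semigroup_on S m" and sub: "S0 \<subseteq> S"
  shows "fx S S0 (dual m) x = ex S S0 m x"
  unfolding ex_def fx_def xbar_dual[OF sg sub] decomp_dual[OF sg sub] ..

lemma qiat_dual:
  assumes q: "quasi_ideal_adequate_transversal S S0 m"
  shows "quasi_ideal_adequate_transversal S S0 (dual m)"
proof -
  have at: "adequate_transversal S S0 m" and qi: "\<forall>a\<in>S0. \<forall>s\<in>S. \<forall>b\<in>S0. m (m a s) b \<in> S0"
    using q unfolding quasi_ideal_adequate_transversal_def by auto
  have sg: "semigroup_on S m" using at unfolding adequate_transversal_def abundant_def by auto
  have sub: "S0 \<subseteq> S" using at unfolding adequate_transversal_def star_subsemigroup_def subsemigroup_def by auto
  have at': "adequate_transversal S S0 (dual m)"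
    using at unfolding adequate_transversal_def abundant_dual adequate_dual star_subsemigroup_dual
      ex_decomp_dual[OF sg sub] by blast
  have "dual m (dual m a s) b \<in> S0" if "a \<in> S0" "s \<in> S" "b \<in> S0" for a s b
  proof -
    have "m b (m s a) = m (m b s) a" using that sub sg_assoc[OF sg, of b s a] by (metis subsetD)
    then show ?thesis using qi that by simp
  qed
  then show ?thesis using at' unfolding quasi_ideal_adequate_transversal_def by blast
qed


lemma greenR_intro:
  "x \<in> U \<Longrightarrow> y \<in> U \<Longrightarrow> u \<in> U \<Longrightarrow> v \<in> U \<Longrightarrow> x = m y u \<Longrightarrow> y = m x v \<Longrightarrow> greenR U m x y"
  unfolding greenR_def S1_def by (metis image_eqI insertI2 rmult1.simps(2))

lemma greenL_intro:
  "x \<in> U \<Longrightarrow> y \<in> U \<Longrightarrow> u \<in> U \<Longrightarrow> v \<in> U \<Longrightarrow> x = m u y \<Longrightarrow> y = m v x \<Longrightarrow> greenL U m x y"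
  unfolding greenL_def S1_def by (metis image_eqI insertI2 lmult1.simps(2))

locale qt =
  fixes S S0 :: "'a set" and m :: "'a \<Rightarrow> 'a \<Rightarrow> 'a" (infixl "\<cdot>" 70)
  assumes abS: "abundant S m" and qS: "quasi_ideal_adequate_transversal S S0 m"
begin

lemma sg: "semigroup_on S m" using abS unfolding abundant_def by auto
lemma cl[simp]: "a \<in> S \<Longrightarrow> b \<in> S \<Longrightarrow> a \<cdot> b \<in> S" using sg_closed[OF sg] .
lemma asc: "a \<in> S \<Longrightarrow> b \<in> S \<Longrightarrow> c \<in> S \<Longrightarrow> a \<cdot> b \<cdot> c = a \<cdot> (b \<cdot> c)" using sg_assoc[OF sg] .
lemma at: "adequate_transversal S S0 m" using qS unfolding quasi_ideal_adequate_transversal_def by auto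
lemma adS0: "adequate S0 m" using at unfolding adequate_transversal_def by auto
lemma abS0: "abundant S0 m" using adS0 unfolding adequate_def by auto
lemma sgS0: "semigroup_on S0 m" using abS0 unfolding abundant_def by auto
lemma ssub: "star_subsemigroup S0 S m" using at unfolding adequate_transversal_def by auto
lemma sub: "S0 \<subseteq> S" using ssub unfolding star_subsemigroup_def subsemigroup_def by auto
lemma S0S[simp]: "a \<in> S0 \<Longrightarrow> a \<in> S" using sub by auto
lemma clS0[simp]: "a \<in> S0 \<Longrightarrow> b \<in> S0 \<Longrightarrow> a \<cdot> b \<in> S0" using sg_closed[OF sgS0] .
lemma comm: "e \<in> idems S0 m \<Longrightarrow> f \<in> idems S0 m \<Longrightarrow> e \<cdot> f = f \<cdot> e"
  using adS0 unfolding adequate_def by auto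
lemma qi: "a \<in> S0 \<Longrightarrow> s \<in> S \<Longrightarrow> b \<in> S0 \<Longrightarrow> a \<cdot> s \<cdot> b \<in> S0"
  using qS unfolding quasi_ideal_adequate_transversal_def by auto
lemma RS0: "a \<in> S0 \<Longrightarrow> b \<in> S0 \<Longrightarrow> Rstar S0 m a b \<longleftrightarrow> Rstar S m a b"
  using ssub unfolding star_subsemigroup_def by auto
lemma LS0: "a \<in> S0 \<Longrightarrow> b \<in> S0 \<Longrightarrow> Lstar S0 m a b \<longleftrightarrow> Lstar S m a b"
  using ssub unfolding star_subsemigroup_def by auto
lemma tr: "x \<in> S \<Longrightarrow> \<exists>!xb. xb \<in> S0 \<and> (\<exists>e f. decomp S S0 m x xb e f)"
  using at unfolding adequate_transversal_def by auto
lemma idS0_S: "e \<in> idems S0 m \<Longrightarrow> e \<in> idems S m"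
  unfolding idems_def by auto
lemma idemsI: "e \<in> U \<Longrightarrow> e \<cdot> e = e \<Longrightarrow> e \<in> idems U m"
  unfolding idems_def by auto
lemma idemsD: "e \<in> idems U m \<Longrightarrow> e \<in> U \<and> e \<cdot> e = e"
  unfolding idems_def by auto

abbreviation pl where "pl a \<equiv> aplus S0 m a"
abbreviation st where "st a \<equiv> astar S0 m a"

lemma R_uniq_idem:
  assumes "e \<in> idems S0 m" "f \<in> idems S0 m" "Rstar S0 m a e" "Rstar S0 m a f"
  shows "e = f"
proof -
  have ef: "Rstar S0 m e f" using assms(3,4) Rstar_sym Rstar_trans by metis
  have "f \<cdot> e = e" using Rstar_idem[OF ef assms(2)] .
  moreover have "e \<cdot> f = f" using Rstar_idem[OF Rstar_sym[OF ef] assms(1)] .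
  ultimately show ?thesis using comm[OF assms(1,2)] by simp
qed

lemma L_uniq_idem:
  assumes "e \<in> idems S0 m" "f \<in> idems S0 m" "Lstar S0 m a e" "Lstar S0 m a f"
  shows "e = f"
proof -
  have ef: "Lstar S0 m e f" using assms(3,4) Lstar_sym Lstar_trans by metis
  have "e \<cdot> f = e" using Lstar_idem[OF ef assms(2)] .
  moreover have "f \<cdot> e = f" using Lstar_idem[OF Lstar_sym[OF ef] assms(1)] .
  ultimately show ?thesis using comm[OF assms(1,2)] by simp
qed

lemma pl_prop: assumes "a \<in> S0" shows "pl a \<in> idems S0 m \<and> Rstar S0 m a (pl a)"
proof -
  obtain e where e: "e \<in> idems S0 m" "Rstar S0 m a e" using abS0 assms unfolding abundant_def by blast
  have "\<exists>!e. e \<in> idems S0 m \<and> Rstar S0 m a e"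
  proof (rule ex1I[of _ e])
    show "e \<in> idems S0 m \<and> Rstar S0 m a e" using e by simp
  next
    fix y assume "y \<in> idems S0 m \<and> Rstar S0 m a y"
    then show "y = e" using R_uniq_idem[of y e a] e by simp
  qed
  then show ?thesis unfolding aplus_def by (rule theI')
qed

lemma st_prop: assumes "a \<in> S0" shows "st a \<in> idems S0 m \<and> Lstar S0 m a (st a)"
proof -
  obtain e where e: "e \<in> idems S0 m" "Lstar S0 m a e" using abS0 assms unfolding abundant_def by blast
  have "\<exists>!e. e \<in> idems S0 m \<and> Lstar S0 m a e"
  proof (rule ex1I[of _ e])
    show "e \<in> idems S0 m \<and> Lstar S0 m a e" using e by simp
  next
    fix y assume "y \<in> idems S0 m \<and> Lstar S0 m a y"
    then show "y = e" using L_uniq_idem[of y e a] e by simp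
  qed
  then show ?thesis unfolding astar_def by (rule theI')
qed

lemma pl_eq: assumes "a \<in> S0" "q \<in> idems S0 m" "Rstar S0 m a q" shows "pl a = q"
  using R_uniq_idem[OF conjunct1[OF pl_prop[OF assms(1)]] assms(2) conjunct2[OF pl_prop[OF assms(1)]] assms(3)] .

lemma st_eq: assumes "a \<in> S0" "q \<in> idems S0 m" "Lstar S0 m a q" shows "st a = q"
  using L_uniq_idem[OF conjunct1[OF st_prop[OF assms(1)]] assms(2) conjunct2[OF st_prop[OF assms(1)]] assms(3)] .

lemma pl_idems: "a \<in> S0 \<Longrightarrow> pl a \<in> idems S0 m" using pl_prop by simp
lemma st_idems: "a \<in> S0 \<Longrightarrow> st a \<in> idems S0 m" using st_prop by simp
lemma pl_S0[simp]: assumes "a \<in> S0" shows "pl a \<in> S0" using idemsD[OF pl_idems[OF assms]] by simp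
lemma st_S0[simp]: assumes "a \<in> S0" shows "st a \<in> S0" using idemsD[OF st_idems[OF assms]] by simp
lemma pl_pl[simp]: assumes "a \<in> S0" shows "pl a \<cdot> pl a = pl a" using idemsD[OF pl_idems[OF assms]] by simp
lemma st_st[simp]: assumes "a \<in> S0" shows "st a \<cdot> st a = st a" using idemsD[OF st_idems[OF assms]] by simp
lemma pl_left[simp]: assumes "a \<in> S0" shows "pl a \<cdot> a = a"
  using Rstar_idem[OF conjunct2[OF pl_prop[OF assms]] conjunct1[OF pl_prop[OF assms]]] .
lemma st_right[simp]: assumes "a \<in> S0" shows "a \<cdot> st a = a"
  using Lstar_idem[OF conjunct2[OF st_prop[OF assms]] conjunct1[OF st_prop[OF assms]]] .
lemma RS_pl: assumes "a \<in> S0" shows "Rstar S m a (pl a)"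
  using RS0[OF assms pl_S0[OF assms]] pl_prop[OF assms] by simp
lemma LS_st: assumes "a \<in> S0" shows "Lstar S m a (st a)"
  using LS0[OF assms st_S0[OF assms]] st_prop[OF assms] by simp
lemma pl_of_idem: assumes "q \<in> idems S0 m" shows "pl q = q"
proof -
  have q: "q \<in> S0" using idemsD[OF assms] by simp
  show ?thesis by (rule pl_eq[OF q assms Rstar_refl[OF q]])
qed
lemma st_of_idem: assumes "q \<in> idems S0 m" shows "st q = q"
proof -
  have q: "q \<in> S0" using idemsD[OF assms] by simp
  show ?thesis by (rule st_eq[OF q assms Lstar_refl[OF q]])
qed

lemma decompD:
  assumes "decomp S S0 m x a e f"
  shows "a \<in> S0 \<and> e \<in> S \<and> f \<in> S \<and> e \<cdot> e = e \<and> f \<cdot> f = f \<and> x = e \<cdot> a \<cdot> f \<and>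
    e \<cdot> pl a = e \<and> pl a \<cdot> e = pl a \<and> st a \<cdot> f = f \<and> f \<cdot> st a = st a"
proof -
  have a: "a \<in> S0" and e: "e \<in> idems S m" and f: "f \<in> idems S m" and x: "x = e \<cdot> a \<cdot> f"
    and gL: "greenL S m e (pl a)" and gR: "greenR S m f (st a)"
    using assms unfolding decomp_def by auto
  have "e \<cdot> pl a = e \<and> pl a \<cdot> e = pl a"
    using gL greenL_idem[OF sg e idS0_S[OF pl_idems[OF a]]] by simp
  moreover have "st a \<cdot> f = f \<and> f \<cdot> st a = st a"
    using gR greenR_idem[OF sg f idS0_S[OF st_idems[OF a]]] by simp
  ultimately show ?thesis using a x idemsD[OF e] idemsD[OF f] by simp
qed

lemma decompI:
  assumes "a \<in> S0" "e \<in> S" "f \<in> S" "e \<cdot> e = e" "f \<cdot> f = f" "x = e \<cdot> a \<cdot> f"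
    "e \<cdot> pl a = e" "pl a \<cdot> e = pl a" "st a \<cdot> f = f" "f \<cdot> st a = st a"
  shows "decomp S S0 m x a e f"
proof -
  have e: "e \<in> idems S m" and f: "f \<in> idems S m" using assms idemsI by auto
  have "greenL S m e (pl a)" using greenL_idem[OF sg e idS0_S[OF pl_idems[OF assms(1)]]] assms by simp
  moreover have "greenR S m f (st a)" using greenR_idem[OF sg f idS0_S[OF st_idems[OF assms(1)]]] assms by simp
  ultimately show ?thesis unfolding decomp_def using assms e f by blast
qed

lemma decomp_RL:
  assumes d: "decomp S S0 m x a e f"
  shows "Rstar S m x e \<and> Lstar S m x f"
proof -
  note D = decompD[OF d]
  have a: "a \<in> S0" and eS: "e \<in> S" and fS: "f \<in> S" and x: "x = e \<cdot> a \<cdot> f" using D by auto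
  have xS: "x \<in> S" using x a eS fS by simp
  have "Rstar S m (e \<cdot> a) (e \<cdot> pl a)" by (rule Rstar_lcompat[OF sg eS RS_pl[OF a]])
  then have r1: "Rstar S m (e \<cdot> a) e" using D by simp
  have "x \<cdot> st a = e \<cdot> a" using D a eS fS by (simp add: asc)
  then have "greenR S m x (e \<cdot> a)" 
    by (intro greenR_intro[where u=f and v="st a"]) (use x a eS fS in simp_all)
  then have "Rstar S m x (e \<cdot> a)" by (rule greenR_Rstar[OF sg])
  then have R: "Rstar S m x e" using r1 by (rule Rstar_trans)
  have "Lstar S m (a \<cdot> f) (st a \<cdot> f)" by (rule Lstar_rcompat[OF sg fS LS_st[OF a]])
  then have l1: "Lstar S m (a \<cdot> f) f" using D by simp
  have "pl a \<cdot> x = a \<cdot> f"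
  proof -
    have "pl a \<cdot> x = (pl a \<cdot> e) \<cdot> a \<cdot> f" using x a eS fS by (simp add: asc)
    also have "\<dots> = a \<cdot> f" using D a fS by (simp add: asc)
    finally show ?thesis .
  qed
  then have "greenL S m x (a \<cdot> f)" 
    by (intro greenL_intro[where u=e and v="pl a"]) (use x a eS fS in \<open>simp_all add: asc\<close>)
  then have "Lstar S m x (a \<cdot> f)" by (rule greenL_Lstar[OF sg])
  then have L: "Lstar S m x f" using l1 by (rule Lstar_trans)
  show ?thesis using R L by blast
qed

lemma decomp_ef_uniq:
  assumes d1: "decomp S S0 m x a e f" and d2: "decomp S S0 m x a e' f'"
  shows "e = e' \<and> f = f'"
proof -
  note D1 = decompD[OF d1] and D2 = decompD[OF d2]
  have a: "a \<in> S0" using D1 by blast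
  have R: "Rstar S m e e'"
    using Rstar_trans[OF Rstar_sym[OF conjunct1[OF decomp_RL[OF d1]]] conjunct1[OF decomp_RL[OF d2]]] .
  have L: "Lstar S m f f'"
    using Lstar_trans[OF Lstar_sym[OF conjunct2[OF decomp_RL[OF d1]]] conjunct2[OF decomp_RL[OF d2]]] .
  have ei: "e \<in> idems S m" "f \<in> idems S m" using D1 idemsI by auto
  have e'i: "e' \<in> idems S m" "f' \<in> idems S m" using D2 idemsI by auto
  have q1: "e \<cdot> pl a = e" "pl a \<cdot> e' = pl a" "st a \<cdot> f = f" "f' \<cdot> st a = st a"
    "e \<in> S" "e' \<in> S" "f \<in> S" "f' \<in> S" using D1 D2 by auto
  have "e = e \<cdot> pl a" using q1 by simp
  also have "\<dots> = e \<cdot> (pl a \<cdot> e')" using q1 by simp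
  also have "\<dots> = (e \<cdot> pl a) \<cdot> e'" by (rule asc[symmetric]) (use q1 a in simp_all)
  also have "\<dots> = e \<cdot> e'" using q1 by simp
  also have "\<dots> = e'" using Rstar_idem[OF Rstar_sym[OF R] ei(1)] .
  finally have ee: "e = e'" .
  have "f = st a \<cdot> f" using q1 by simp
  also have "\<dots> = (f' \<cdot> st a) \<cdot> f" using q1 by simp
  also have "\<dots> = f' \<cdot> (st a \<cdot> f)" by (rule asc) (use q1 a in simp_all)
  also have "\<dots> = f' \<cdot> f" using q1 by simp
  also have "\<dots> = f'" using Lstar_idem[OF Lstar_sym[OF L] ei(2)] .
  finally have ff: "f = f'" .
  show ?thesis using ee ff by blast
qed

abbreviation xb where "xb x \<equiv> xbar S S0 m x"
abbreviation ee where "ee x \<equiv> ex S S0 m x"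
abbreviation ff where "ff x \<equiv> fx S S0 m x"

lemma decomp_S: assumes "decomp S S0 m x a e f" shows "x \<in> S"
proof -
  note D = decompD[OF assms]
  then show ?thesis by simp
qed

lemma xb_prop: "x \<in> S \<Longrightarrow> xb x \<in> S0 \<and> (\<exists>e f. decomp S S0 m x (xb x) e f)"
  unfolding xbar_def by (rule theI'[OF tr])

lemma xb_eq: assumes "decomp S S0 m x a e f" shows "xb x = a"
proof -
  have x: "x \<in> S" using decomp_S[OF assms] .
  have a: "a \<in> S0" using decompD[OF assms] by blast
  show ?thesis unfolding xbar_def
    by (rule the1_equality[OF tr[OF x]]) (use assms a in blast)
qed

lemma ee_eq: assumes "decomp S S0 m x a e f" shows "ee x = e"
  unfolding ex_def xb_eq[OF assms]
proof (rule the_equality)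
  show "\<exists>f. decomp S S0 m x a e f" using assms by blast
next
  fix e' assume "\<exists>f'. decomp S S0 m x a e' f'"
  then show "e' = e" using decomp_ef_uniq assms by metis
qed

lemma ff_eq: assumes "decomp S S0 m x a e f" shows "ff x = f"
  unfolding fx_def xb_eq[OF assms]
proof (rule the_equality)
  show "\<exists>e. decomp S S0 m x a e f" using assms by blast
next
  fix f' assume "\<exists>e'. decomp S S0 m x a e' f'"
  then show "f' = f" using decomp_ef_uniq assms by metis
qed

lemma decomp_self: assumes "x \<in> S" shows "decomp S S0 m x (xb x) (ee x) (ff x)"
proof -
  obtain e f where d: "decomp S S0 m x (xb x) e f" using xb_prop[OF assms] by blast
  show ?thesis using d ee_eq[OF d] ff_eq[OF d] by simp
qed

lemma decomp_S0: assumes "a \<in> S0" shows "decomp S S0 m a a (pl a) (st a)"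
  by (rule decompI) (use assms in \<open>simp_all add: asc\<close>)

lemma xb_S0[simp]: "a \<in> S0 \<Longrightarrow> xb a = a" using xb_eq[OF decomp_S0] .
lemma ee_S0[simp]: "a \<in> S0 \<Longrightarrow> ee a = pl a" using ee_eq[OF decomp_S0] .
lemma ff_S0[simp]: "a \<in> S0 \<Longrightarrow> ff a = st a" using ff_eq[OF decomp_S0] .

end


context qt
begin

abbreviation LL where "LL \<equiv> {x \<in> S. ff x = ff (xb x)}"

lemma LL_iff: "x \<in> LL \<longleftrightarrow> x \<in> S \<and> ff x = st (xb x)"
proof
  assume "x \<in> LL" then show "x \<in> S \<and> ff x = st (xb x)" using xb_prop[of x] by simp
next
  assume "x \<in> S \<and> ff x = st (xb x)" then show "x \<in> LL" using xb_prop[of x] by simp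
qed

lemma LL_S: "x \<in> LL \<Longrightarrow> x \<in> S" by simp

lemma S0_LL: "s \<in> S0 \<Longrightarrow> s \<in> LL" by simp

lemma mkL:
  assumes a: "a \<in> S0" and e: "e \<in> S" "e \<cdot> e = e" "e \<cdot> pl a = e" "pl a \<cdot> e = pl a"
    and c: "c \<in> S0" "pl a \<cdot> c = c"
  shows "decomp S S0 m (e \<cdot> c) c (e \<cdot> pl c) (st c)"
proof -
  have h1: "pl a \<cdot> pl c = pl c" by (rule Rstar_use1[OF RS_pl[OF c(1)]]) (use a c in simp_all)
  have h2: "pl c \<cdot> pl a = pl c" using h1 comm[OF pl_idems[OF a] pl_idems[OF c(1)]] by simp
  have h3: "pl c \<cdot> e = pl c"
  proof -
    have "pl c \<cdot> e = (pl c \<cdot> pl a) \<cdot> e" using h2 by simp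
    also have "\<dots> = pl c \<cdot> (pl a \<cdot> e)" by (rule asc) (use a c e in simp_all)
    also have "\<dots> = pl c" using e h2 by simp
    finally show ?thesis .
  qed
  have h3': "pl c \<cdot> (e \<cdot> z) = pl c \<cdot> z" if "z \<in> S" for z
    using that a c e h3 by (simp add: asc[symmetric])
  show ?thesis
  proof (rule decompI)
    show "c \<in> S0" "e \<cdot> pl c \<in> S" "st c \<in> S" using c e by simp_all
    show "e \<cdot> pl c \<cdot> (e \<cdot> pl c) = e \<cdot> pl c" using c e h3' by (simp add: asc)
    show "st c \<cdot> st c = st c" using c by simp
    show "e \<cdot> c = e \<cdot> pl c \<cdot> c \<cdot> st c" using c e by (simp add: asc)
    show "e \<cdot> pl c \<cdot> pl c = e \<cdot> pl c" using c e by (simp add: asc)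
    show "pl c \<cdot> (e \<cdot> pl c) = pl c" using c e h3' by simp
    show "st c \<cdot> st c = st c" "st c \<cdot> st c = st c" using c by simp_all
  qed
qed

lemma mkL':
  assumes a: "a \<in> S0" and e: "e \<in> S" "e \<cdot> e = e" "e \<cdot> pl a = e" "pl a \<cdot> e = pl a"
    and c: "c \<in> S0" "pl a \<cdot> c = c"
  shows "e \<cdot> c \<in> LL \<and> xb (e \<cdot> c) = c \<and> ee (e \<cdot> c) = e \<cdot> pl c"
proof -
  note d = mkL[OF assms]
  have "ff (e \<cdot> c) = st c" using ff_eq[OF d] .
  moreover have "xb (e \<cdot> c) = c" using xb_eq[OF d] .
  moreover have "ee (e \<cdot> c) = e \<cdot> pl c" using ee_eq[OF d] .
  ultimately show ?thesis using c e by simp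
qed

lemma decomp_right: assumes "decomp S S0 m x a e f" shows "x \<cdot> f = x"
proof -
  note D = decompD[OF assms]
  have "x \<cdot> f = e \<cdot> a \<cdot> (f \<cdot> f)" using D by (simp add: asc)
  also have "\<dots> = x" using D by simp
  finally show ?thesis .
qed

lemma decomp_st: assumes "decomp S S0 m x a e (st a)" shows "x = e \<cdot> a"
proof -
  note D = decompD[OF assms]
  have "x = e \<cdot> (a \<cdot> st a)" using D by (simp add: asc)
  also have "\<dots> = e \<cdot> a" using D by simp
  finally show ?thesis .
qed

lemma ff_right: assumes "x \<in> S" shows "x \<cdot> ff x = x"
  by (rule decomp_right[OF decomp_self[OF assms]])

lemma LL_decomp: assumes "x \<in> LL"
  shows "decomp S S0 m x (xb x) (ee x) (st (xb x)) \<and> x = ee x \<cdot> xb x"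
proof -
  have xS: "x \<in> S" using assms by simp
  have f: "ff x = st (xb x)" using assms LL_iff by blast
  have d: "decomp S S0 m x (xb x) (ee x) (st (xb x))" using decomp_self[OF xS] f by simp
  show ?thesis using d decomp_st[OF d] by simp
qed

lemma ee_LL: assumes "x \<in> S" shows "ee x \<in> LL"
proof -
  note D = decompD[OF decomp_self[OF assms]]
  have "ee x \<cdot> pl (xb x) \<in> LL"
    using mkL'[of "xb x" "ee x" "pl (xb x)"] D by simp
  then show ?thesis using D by simp
qed

lemma ee_idems: assumes "x \<in> S" shows "ee x \<cdot> ee x = ee x" "ee x \<in> S"
  using decompD[OF decomp_self[OF assms]] by simp_all

lemma LL_closed: assumes x: "x \<in> LL" and y: "y \<in> LL" shows "x \<cdot> y \<in> LL"
proof -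
  define a where "a = xb x"
  define e where "e = ee x"
  define b where "b = xb y"
  have xS: "x \<in> S" and yS: "y \<in> S" using x y by simp_all
  note D = decompD[OF decomp_self[OF xS]]
  have a: "a \<in> S0" "b \<in> S0" using xb_prop xS yS a_def b_def by simp_all
  have xe: "x = e \<cdot> a" using LL_decomp[OF x] a_def e_def by simp
  have "ff y = st (xb y)" using y LL_iff by blast
  then have yb: "y \<cdot> st b = y" using ff_right[OF yS] b_def by simp
  have "a \<cdot> y = a \<cdot> y \<cdot> st b" using yb a yS by (simp add: asc)
  moreover have "a \<cdot> y \<cdot> st b \<in> S0" using qi a yS by simp
  ultimately have c: "a \<cdot> y \<in> S0" by simp
  have pc: "pl a \<cdot> (a \<cdot> y) = a \<cdot> y" using a yS by (simp add: asc[symmetric])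
  have "e \<cdot> (a \<cdot> y) \<in> LL"
    using mkL'[OF a(1) _ _ _ _ c pc, of e] D a_def e_def by simp
  moreover have "x \<cdot> y = e \<cdot> (a \<cdot> y)"
  proof -
    have eS: "e \<in> S" using D e_def by simp
    have "x \<cdot> y = e \<cdot> a \<cdot> y" using xe by simp
    also have "\<dots> = e \<cdot> (a \<cdot> y)" by (rule asc) (use eS a yS in simp_all)
    finally show ?thesis .
  qed
  ultimately show ?thesis by simp
qed

lemma idemL:
  assumes g: "g \<in> LL" "g \<cdot> g = g"
  shows "xb g \<in> idems S0 m \<and> ee g = g \<and> g \<cdot> xb g = g \<and> xb g \<cdot> g = xb g"
proof -
  define a where "a = xb g"
  define e where "e = ee g"
  have gS: "g \<in> S" using g by simp
  have d: "decomp S S0 m g a e (st a)" using LL_decomp[OF g(1)] a_def e_def by simp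
  note D = decompD[OF d]
  have a: "a \<in> S0" and eS: "e \<in> S" and ee': "e \<cdot> e = e" and epa: "e \<cdot> pl a = e"
    and pae: "pl a \<cdot> e = pl a" using D by auto
  have ge: "g = e \<cdot> a" using LL_decomp[OF g(1)] a_def e_def by simp
  have gi: "g \<in> idems S m" using gS g(2) by (rule idemsI)
  have ei: "e \<in> idems S m" using eS ee' by (rule idemsI)
  have Rg: "Rstar S m g e" and Lg: "Lstar S m g (st a)" using decomp_RL[OF d] by auto
  have g_e: "g \<cdot> e = e" using Rstar_idem[OF Rstar_sym[OF Rg] gi] .
  have g_sa: "g \<cdot> st a = g" using Lstar_idem[OF Lg idS0_S[OF st_idems[OF a]]] .
  have sa_g: "st a \<cdot> g = st a" using Lstar_idem[OF Lstar_sym[OF Lg] gi] .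
  define k where "k = st a \<cdot> e"
  have kS0: "k \<in> S0"
  proof -
    have "st a \<cdot> e \<cdot> pl a \<in> S0" using qi a eS by simp
    moreover have "st a \<cdot> e \<cdot> pl a = k" using a eS epa k_def by (simp add: asc)
    ultimately show ?thesis by simp
  qed
  have a_e: "a \<cdot> e = pl a"
  proof -
    have "pl a = pl a \<cdot> (g \<cdot> e)" using pae g_e by simp
    also have "\<dots> = (pl a \<cdot> e) \<cdot> (a \<cdot> e)" using ge a eS by (simp add: asc)
    also have "\<dots> = a \<cdot> e" using pae a eS by (simp add: asc[symmetric])
    finally show ?thesis by simp
  qed
  have ka: "k \<cdot> a = st a" using k_def a eS ge sa_g by (simp add: asc)
  have ak: "a \<cdot> k = pl a" using k_def a eS a_e by (simp add: asc[symmetric])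
  have kpa: "k \<cdot> pl a = k" using k_def a eS epa by (simp add: asc)
  have sak: "st a \<cdot> k = k" using k_def a eS by (simp add: asc[symmetric])
  have "greenR S0 m k (st a)" by (rule greenR_intro[where u=k and v=a]) (use kS0 a sak ka in simp_all)
  then have "Rstar S0 m k (st a)" by (rule greenR_Rstar[OF sgS0])
  then have pk: "pl k = st a" using pl_eq[OF kS0 st_idems[OF a]] by simp
  have "greenL S0 m k (pl a)" by (rule greenL_intro[where u=k and v=a]) (use kS0 a kpa ak in simp_all)
  then have "Lstar S0 m k (pl a)" by (rule greenL_Lstar[OF sgS0])
  then have sk: "st k = pl a" using st_eq[OF kS0 pl_idems[OF a]] by simp
  have gk: "g \<cdot> k = e"
  proof -
    have "g \<cdot> k = (g \<cdot> st a) \<cdot> e" using k_def gS a eS by (simp add: asc)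
    then show ?thesis using g_sa g_e by simp
  qed
  have d1: "decomp S S0 m e k g (pl a)"
  proof (rule decompI)
    show "k \<in> S0" "g \<in> S" "pl a \<in> S" "g \<cdot> g = g" "pl a \<cdot> pl a = pl a" using kS0 gS a g by simp_all
    show "e = g \<cdot> k \<cdot> pl a" using gk epa by simp
    show "g \<cdot> pl k = g" "pl k \<cdot> g = pl k" using pk g_sa sa_g by simp_all
    show "st k \<cdot> pl a = pl a" "pl a \<cdot> st k = st k" using sk a by simp_all
  qed
  have pa_i: "pl a \<in> idems S0 m" using pl_idems[OF a] .
  have d2: "decomp S S0 m e (pl a) e (pl a)"
  proof (rule decompI)
    show "pl a \<in> S0" "e \<in> S" "pl a \<in> S" "e \<cdot> e = e" "pl a \<cdot> pl a = pl a" using a eS ee' by simp_all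
    show "e = e \<cdot> pl a \<cdot> pl a" using epa by simp
    show "e \<cdot> pl (pl a) = e" "pl (pl a) \<cdot> e = pl (pl a)" using pl_of_idem[OF pa_i] epa pae by simp_all
    show "st (pl a) \<cdot> pl a = pl a" "pl a \<cdot> st (pl a) = st (pl a)" using st_of_idem[OF pa_i] a by simp_all
  qed
  have kp: "k = pl a" using xb_eq[OF d1] xb_eq[OF d2] by simp
  have asa: "st a = a" using ka kp a by simp
  have ai: "a \<in> idems S0 m" using st_idems[OF a] asa by simp
  have pla: "pl a = a" using pl_of_idem[OF ai] .
  have eg: "e = g" using ge epa pla by simp
  show ?thesis using ai eg g_sa sa_g asa a_def e_def by simp
qed

lemma xb_prod:
  assumes g: "g \<in> LL" "g \<cdot> g = g" and h: "h \<in> LL" and gh: "g \<cdot> h = h"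
  shows "xb h = xb g \<cdot> h"
proof -
  define a where "a = xb g"
  have I: "a \<in> idems S0 m" "g \<cdot> a = g" "a \<cdot> g = a" using idemL[OF g] a_def by auto
  have a: "a \<in> S0" "a \<cdot> a = a" using idemsD[OF I(1)] by auto
  have pla: "pl a = a" using pl_of_idem[OF I(1)] .
  have gS: "g \<in> S" and hS: "h \<in> S" using g h by simp_all
  have "ff h = st (xb h)" using h LL_iff by blast
  then have hb: "h \<cdot> st (xb h) = h" using ff_right[OF hS] by simp
  have hb0: "xb h \<in> S0" using xb_prop[OF hS] by simp
  have "a \<cdot> h = a \<cdot> h \<cdot> st (xb h)" using hb a hS hb0 by (simp add: asc)
  moreover have "a \<cdot> h \<cdot> st (xb h) \<in> S0" using qi a hS hb0 by simp
  ultimately have c: "a \<cdot> h \<in> S0" by simp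
  have pc: "pl a \<cdot> (a \<cdot> h) = a \<cdot> h" using pla a hS by (simp add: asc[symmetric])
  have "xb (g \<cdot> (a \<cdot> h)) = a \<cdot> h"
    using mkL'[OF a(1) gS g(2) _ _ c pc] pla I by simp
  moreover have "g \<cdot> (a \<cdot> h) = h" using I gh a gS hS by (simp add: asc[symmetric])
  ultimately show ?thesis using a_def by simp
qed

lemma LLidem_eq:
  assumes g: "g \<in> LL" "g \<cdot> g = g" and h: "h \<in> LL" "h \<cdot> h = h"
    and gh: "g \<cdot> h = h" and hg: "h \<cdot> g = g"
  shows "g = h"
proof -
  define a where "a = xb g"
  define b where "b = xb h"
  have Ia: "a \<in> idems S0 m" "g \<cdot> a = g" "a \<cdot> g = a" using idemL[OF g] a_def by auto
  have Ib: "b \<in> idems S0 m" "h \<cdot> b = h" "b \<cdot> h = b" using idemL[OF h] b_def by auto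
  have a: "a \<in> S0" "a \<cdot> a = a" and b: "b \<in> S0" "b \<cdot> b = b" using idemsD[OF Ia(1)] idemsD[OF Ib(1)] by auto
  have gS: "g \<in> S" and hS: "h \<in> S" using g h by simp_all
  have bah: "b = a \<cdot> h" using xb_prod[OF g h(1) gh] a_def b_def by simp
  have abg: "a = b \<cdot> g" using xb_prod[OF h g(1) hg] a_def b_def by simp
  have "a \<cdot> b = b" using bah a hS by (simp add: asc[symmetric])
  moreover have "b \<cdot> a = a" using abg b gS by (simp add: asc[symmetric])
  ultimately have ab: "a = b" using comm[OF Ia(1) Ib(1)] by simp
  have "g = h \<cdot> g" using hg by simp
  also have "\<dots> = h \<cdot> b \<cdot> g" using Ib by simp
  also have "\<dots> = h \<cdot> (a \<cdot> g)" using ab b hS gS by (simp add: asc)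
  also have "\<dots> = h" using Ia Ib ab by simp
  finally show ?thesis .
qed

lemma LL_sg: "semigroup_on LL m"
  unfolding semigroup_on_def using LL_closed asc by auto

lemma LL_sub: "subsemigroup LL S m"
  unfolding subsemigroup_def using LL_closed by auto

lemma LL_abundant: "abundant LL m"
  unfolding abundant_def
proof (intro conjI LL_sg ballI)
  fix x assume x: "x \<in> LL"
  then have xS: "x \<in> S" by simp
  have "ee x \<in> idems LL m" using ee_LL[OF xS] ee_idems[OF xS] by (intro idemsI) auto
  moreover have "Rstar LL m x (ee x)"
    by (rule Rstar_mono[of LL S]) (use x ee_LL[OF xS] decomp_RL[OF decomp_self[OF xS]] in auto)
  ultimately show "\<exists>e\<in>idems LL m. Rstar LL m x e" by blast
next
  fix x assume x: "x \<in> LL"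
  then have xS: "x \<in> S" by simp
  have b: "xb x \<in> S0" using xb_prop[OF xS] by simp
  have "st (xb x) \<in> idems LL m" using b by (intro idemsI) auto
  moreover have "Lstar LL m x (st (xb x))"
    by (rule Lstar_mono[of LL S]) (use x b LL_iff decomp_RL[OF decomp_self[OF xS]] in auto)
  ultimately show "\<exists>e\<in>idems LL m. Lstar LL m x e" by blast
qed

lemma LL_left_adequate: "left_adequate LL m"
  unfolding left_adequate_def
proof (intro conjI LL_abundant ballI)
  fix x assume x: "x \<in> LL"
  then have xS: "x \<in> S" by simp
  have ei: "ee x \<in> idems LL m" using ee_LL[OF xS] ee_idems[OF xS] by (intro idemsI) auto
  have R: "Rstar LL m x (ee x)"
    by (rule Rstar_mono[of LL S]) (use x ee_LL[OF xS] decomp_RL[OF decomp_self[OF xS]] in auto)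
  show "\<exists>!e. e \<in> idems LL m \<and> Rstar LL m x e"
  proof (rule ex1I[of _ "ee x"])
    show "ee x \<in> idems LL m \<and> Rstar LL m x (ee x)" using ei R by simp
  next
    fix y assume y: "y \<in> idems LL m \<and> Rstar LL m x y"
    have Rey: "Rstar LL m (ee x) y" using Rstar_trans[OF Rstar_sym[OF R]] y by simp
    have yi: "y \<in> LL" "y \<cdot> y = y" using y idemsD by auto
    have 1: "y \<cdot> ee x = ee x" using Rstar_idem[OF Rey] y by simp
    have 2: "ee x \<cdot> y = y" using Rstar_idem[OF Rstar_sym[OF Rey] ei] .
    show "y = ee x" using LLidem_eq[OF yi, of "ee x"] ee_LL[OF xS] ee_idems[OF xS] 1 2 by simp
  qed
qed

lemma decomp_LL_S: "decomp LL S0 m x a e f \<Longrightarrow> decomp S S0 m x a e f"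
proof -
  assume d: "decomp LL S0 m x a e f"
  have sub: "LL \<subseteq> S" by auto
  show ?thesis using d idems_mono[OF sub] greenL_mono[OF sub] greenR_mono[OF sub]
    unfolding decomp_def by blast
qed

lemma LL_qiat: "quasi_ideal_adequate_transversal LL S0 m"
proof -
  have S0LL: "S0 \<subseteq> LL" by auto
  have sub: "LL \<subseteq> S" by auto
  have ss: "star_subsemigroup S0 LL m"
    unfolding star_subsemigroup_def
  proof (intro conjI abS0 ballI)
    show "subsemigroup S0 LL m" unfolding subsemigroup_def using S0LL by auto
  next
    fix a b assume ab: "a \<in> S0" "b \<in> S0"
    show "Lstar S0 m a b \<longleftrightarrow> Lstar LL m a b"
    proof
      assume "Lstar S0 m a b"
      then have "Lstar S m a b" using LS0 ab by simp
      then show "Lstar LL m a b" using ab by (intro Lstar_mono[OF sub]) auto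
    next
      assume "Lstar LL m a b"
      then show "Lstar S0 m a b" by (rule Lstar_mono[OF S0LL ab])
    qed
    show "Rstar S0 m a b \<longleftrightarrow> Rstar LL m a b"
    proof
      assume "Rstar S0 m a b"
      then have "Rstar S m a b" using RS0 ab by simp
      then show "Rstar LL m a b" using ab by (intro Rstar_mono[OF sub]) auto
    next
      assume "Rstar LL m a b"
      then show "Rstar S0 m a b" by (rule Rstar_mono[OF S0LL ab])
    qed
  qed
  have tr': "\<exists>!c. c \<in> S0 \<and> (\<exists>e f. decomp LL S0 m x c e f)" if x: "x \<in> LL" for x
  proof (rule ex1I[of _ "xb x"])
    have xS: "x \<in> S" using x by simp
    note d = conjunct1[OF LL_decomp[OF x]]
    note D = decompD[OF d]
    have b: "xb x \<in> S0" using D by simp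
    have "decomp LL S0 m x (xb x) (ee x) (st (xb x))"
      unfolding decomp_def
    proof (intro conjI b)
      show "ee x \<in> idems LL m" using ee_LL[OF xS] ee_idems[OF xS] by (intro idemsI) auto
      show "st (xb x) \<in> idems LL m" using b by (intro idemsI) auto
      show "x = ee x \<cdot> xb x \<cdot> st (xb x)" using D by simp
      show "greenL LL m (ee x) (pl (xb x))"
        by (rule greenL_intro[where u="ee x" and v="pl (xb x)"]) (use D b ee_LL[OF xS] in simp_all)
      show "greenR LL m (st (xb x)) (st (xb x))"
        by (rule greenR_intro[where u="st (xb x)" and v="st (xb x)"]) (use b in simp_all)
    qed
    then show "xb x \<in> S0 \<and> (\<exists>e f. decomp LL S0 m x (xb x) e f)" using b by blast
  next
    fix c assume "c \<in> S0 \<and> (\<exists>e f. decomp LL S0 m x c e f)"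
    then obtain e f where "decomp LL S0 m x c e f" by blast
    then show "c = xb x" using xb_eq decomp_LL_S by metis
  qed
  have at': "adequate_transversal LL S0 m"
    unfolding adequate_transversal_def using LL_abundant adS0 ss tr' by blast
  show ?thesis unfolding quasi_ideal_adequate_transversal_def using at' qi by auto
qed

end

lemma Lpart:
  assumes "abundant S m" "quasi_ideal_adequate_transversal S S0 m"
  shows "subsemigroup {x\<in>S. fx S S0 m x = fx S S0 m (xbar S S0 m x)} S m
    \<and> left_adequate {x\<in>S. fx S S0 m x = fx S S0 m (xbar S S0 m x)} m
    \<and> quasi_ideal_adequate_transversal {x\<in>S. fx S S0 m x = fx S S0 m (xbar S S0 m x)} S0 m"
proof -
  interpret qt S S0 m using assms by unfold_locales
  show ?thesis using LL_sub LL_left_adequate LL_qiat by blast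
qed


theorem theorem2p3:
  fixes S S0 :: "'a set" and m :: "'a \<Rightarrow> 'a \<Rightarrow> 'a"
  assumes "abundant S m"
    and "quasi_ideal_adequate_transversal S S0 m"
  defines "R \<equiv> {x\<in>S. ex S S0 m x = ex S S0 m (xbar S S0 m x)}"
    and "L \<equiv> {x\<in>S. fx S S0 m x = fx S S0 m (xbar S S0 m x)}"
  shows "subsemigroup L S m \<and> subsemigroup R S m
    \<and> left_adequate L m \<and> right_adequate R m
    \<and> quasi_ideal_adequate_transversal L S0 m
    \<and> quasi_ideal_adequate_transversal R S0 m"
proof -
  have sg: "semigroup_on S m" using assms(1) unfolding abundant_def by auto
  have sub: "S0 \<subseteq> S" using assms(2) unfolding quasi_ideal_adequate_transversal_def
      adequate_transversal_def star_subsemigroup_def subsemigroup_def by auto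
  have PL: "subsemigroup L S m \<and> left_adequate L m \<and> quasi_ideal_adequate_transversal L S0 m"
    unfolding L_def by (rule Lpart[OF assms(1,2)])
  have ab': "abundant S (dual m)" using abundant_dual[THEN iffD2, OF assms(1)] .
  have q': "quasi_ideal_adequate_transversal S S0 (dual m)" using qiat_dual[OF assms(2)] .
  have Req: "{x\<in>S. fx S S0 (dual m) x = fx S S0 (dual m) (xbar S S0 (dual m) x)} = R"
    unfolding R_def fx_dual[OF sg sub] xbar_dual[OF sg sub] ..
  have PR: "subsemigroup R S (dual m) \<and> left_adequate R (dual m) \<and> quasi_ideal_adequate_transversal R S0 (dual m)"
    unfolding Req[symmetric] by (rule Lpart[OF ab' q'])
  have "quasi_ideal_adequate_transversal R S0 m"
    using qiat_dual[of R S0 "dual m"] PR by simp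
  moreover have "subsemigroup R S m" using subsemigroup_dual[THEN iffD1] PR by blast
  moreover have "right_adequate R m" using left_adequate_dual[THEN iffD1] PR by blast
  ultimately show ?thesis using PL by blast
qed

end
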